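(* Let $(Q,\mathcal Q)$ and $(\Delta,\mathcal D)$ be measurable spaces and $f:Q\to Q$, $g:Q\to\Delta$ measurable maps. Consider the generator $[(Q,\mathcal Q),T,(\Delta,\mathcal D)]$ defined by $T(x,\cdot):=\delta_{(f(x),\,g(f(x)))}$, i.e. $T(x,A\times B)=1$ if $f(x)\in A$ and $g(f(x))\in B$, and $0$ otherwise. Then $$\sigma_Q(T)=\sigma(g\circ f,\,g\circ f^2,\,g\circ f^3,\dots),$$ the $\sigma$-algebra on $Q$ generated by the maps $g\circ f^k$, $k\ge1$.
   Context: A generator $[(Q,\mathcal Q),T,(\Delta,\mathcal D)]$ consists of measurable spaces $(Q,\mathcal Q)$ and $(\Delta,\mathcal D)$ and a Markov transition kernel $T$ from $(Q,\mathcal Q)$ to $(Q\times\Delta,\mathcal Q\otimes\mathcal D)$. For such a generator, $\sigma_Q(T)$ denotes the smallest $\sigma$-subalgebra $\mathcal A$ of $\mathcal Q$ such that for every $C\in\mathcal A\otimes\mathcal D$ the function $x\mapsto T(x,C)$ is $\mathcal A$-measurable (equivalently, the intersection of all $\sigma$-subalgebras of $\mathcal Q$ with this property). *)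

theory Defs
  imports "HOL-Probability.Probability"
begin

text \<open>A transition kernel from Q to Q x D is modelled as a function
  T :: 'q => ('q * 'd) measure; T(x,C) is emeasure (T x) C.
  sigmaQ Q D T is the intersection of all sigma-subalgebras A of sets Q
  such that for every C in A (x) D the map x |-> T(x,C) is A-measurable.\<close>

definition kernel_invariant_subalgebra ::
  "'q measure \<Rightarrow> 'd measure \<Rightarrow> ('q \<Rightarrow> ('q \<times> 'd) measure) \<Rightarrow> 'q set set \<Rightarrow> bool" where
  "kernel_invariant_subalgebra Q D T A \<longleftrightarrow>
     sigma_algebra (space Q) A \<and> A \<subseteq> sets Q \<and>
     (\<forall>C \<in> sets (sigma (space Q) A \<Otimes>\<^sub>M D).
        (\<lambda>x. emeasure (T x) C) \<in> borel_measurable (sigma (space Q) A))"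

definition sigmaQ ::
  "'q measure \<Rightarrow> 'd measure \<Rightarrow> ('q \<Rightarrow> ('q \<times> 'd) measure) \<Rightarrow> 'q set set" where
  "sigmaQ Q D T = \<Inter> {A. kernel_invariant_subalgebra Q D T A}"

end

theory Submission
  imports Defs
begin

theorem theorem4p2:
  fixes Q :: "'q measure" and D :: "'d measure"
    and f :: "'q \<Rightarrow> 'q" and g :: "'q \<Rightarrow> 'd"
  assumes f: "f \<in> Q \<rightarrow>\<^sub>M Q" and g: "g \<in> Q \<rightarrow>\<^sub>M D"
  shows "sigmaQ Q D (\<lambda>x. return (Q \<Otimes>\<^sub>M D) (f x, g (f x))) =
         sigma_sets (space Q)
           (\<Union>k\<in>{1::nat..}. {(g \<circ> (f ^^ k)) -` B \<inter> space Q | B. B \<in> sets D})"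
proof -
  define G where "G = (\<Union>k\<in>{1::nat..}. {(g \<circ> (f ^^ k)) -` B \<inter> space Q | B. B \<in> sets D})"
  define S where "S = sigma_sets (space Q) G"
  define T where "T = (\<lambda>x. return (Q \<Otimes>\<^sub>M D) (f x, g (f x)))"
  define M where "M = sigma (space Q) G"
  have fs: "f x \<in> space Q" if "x \<in> space Q" for x using f that by (meson measurable_space)
  have gs: "g x \<in> space D" if "x \<in> space Q" for x using g that by (meson measurable_space)
  have GP: "G \<subseteq> Pow (space Q)" unfolding G_def by auto
  have SP: "S \<subseteq> Pow (space Q)" unfolding S_def using GP by (meson Pow_iff sigma_sets_into_sp subsetI)
  have fk: "f ^^ k \<in> Q \<rightarrow>\<^sub>M Q" for k
    by (induction k) (auto intro: measurable_compose[OF _ f])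
  have GQ: "G \<subseteq> sets Q" unfolding G_def
  proof safe
    fix k B assume "B \<in> sets D"
    then show "(g \<circ> (f ^^ k)) -` B \<inter> space Q \<in> sets Q"
      using measurable_comp[OF fk g] by (simp add: measurable_sets)
  qed
  have SQ: "S \<subseteq> sets Q" unfolding S_def using GQ by (simp add: sets.sigma_sets_subset)
  have sM: "sets M = S" unfolding M_def S_def using GP by simp
  have spM: "space M = space Q" unfolding M_def using GP by simp
  have sS: "sets (sigma (space Q) S) = sets M" 
  proof -
    have "sets (sigma (space Q) S) = sigma_sets (space Q) S" using SP by (rule sets_measure_of)
    also have "\<dots> = S" unfolding S_def using GP by (rule sigma_sets_sigma_sets_eq)
    finally show ?thesis using sM by simp
  qed
  have spS: "space (sigma (space Q) S) = space Q" using SP by simp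
  have salg: "sigma_algebra (space Q) S" unfolding S_def using GP by (rule sigma_algebra_sigma_sets)
  have fM: "f \<in> M \<rightarrow>\<^sub>M M"
    unfolding M_def
  proof (rule measurable_measure_of[OF GP])
    show "f \<in> space (sigma (space Q) G) \<rightarrow> space Q" using GP fs by simp
    show "f -` A \<inter> space (sigma (space Q) G) \<in> sets (sigma (space Q) G)" if "A \<in> G" for A
    proof -
      from that obtain k B where k: "k \<ge> 1" "B \<in> sets D" "A = (g \<circ> (f ^^ k)) -` B \<inter> space Q"
        unfolding G_def by auto
      have "f -` A \<inter> space Q = (g \<circ> (f ^^ Suc k)) -` B \<inter> space Q"
        using k fs by (auto simp: funpow_Suc_right simp del: funpow.simps)
      moreover have "(g \<circ> (f ^^ Suc k)) -` B \<inter> space Q \<in> G"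
        unfolding G_def using k by (intro UN_I[of "Suc k"]) auto
      ultimately show "f -` A \<inter> space (sigma (space Q) G) \<in> sets (sigma (space Q) G)"
        using GP by simp
    qed
  qed
  have gM: "(g \<circ> f) \<in> M \<rightarrow>\<^sub>M D"
  proof (rule measurableI)
    show "x \<in> space M \<Longrightarrow> (g \<circ> f) x \<in> space D" for x using spM fs gs by simp
    fix B assume "B \<in> sets D"
    then have "(g \<circ> (f ^^ 1)) -` B \<inter> space Q \<in> G" unfolding G_def by (intro UN_I[of 1]) auto
    then show "(g \<circ> f) -` B \<inter> space M \<in> sets M" using sM spM unfolding S_def by auto
  qed
  have inv: "kernel_invariant_subalgebra Q D T S"
    unfolding kernel_invariant_subalgebra_def
  proof (intro conjI salg SQ ballI)
    fix C assume C: "C \<in> sets (sigma (space Q) S \<Otimes>\<^sub>M D)"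
    have C': "C \<in> sets (M \<Otimes>\<^sub>M D)" using C sets_pair_measure_cong[OF sS refl[of "sets D"]] by simp
    have "sets (M \<Otimes>\<^sub>M D) \<subseteq> sets (Q \<Otimes>\<^sub>M D)"
      by (rule sets_pair_in_sets) (use sM SQ in auto)
    then have CQ: "C \<in> sets (Q \<Otimes>\<^sub>M D)" using C' by blast
    have "(\<lambda>x. indicator C (f x, g (f x)) :: ennreal) \<in> borel_measurable M"
    proof (rule measurable_compose[where f="\<lambda>x. (f x, g (f x))", OF _ borel_measurable_indicator[OF C']])
      show "(\<lambda>x. (f x, g (f x))) \<in> M \<rightarrow>\<^sub>M M \<Otimes>\<^sub>M D"
        using measurable_Pair[OF fM gM] by (simp add: o_def)
    qed
    then have "(\<lambda>x. emeasure (T x) C) \<in> borel_measurable M"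
      unfolding T_def using CQ by (simp add: emeasure_return)
    then show "(\<lambda>x. emeasure (T x) C) \<in> borel_measurable (sigma (space Q) S)"
      using measurable_cong_sets[OF sS refl[of "sets (borel::ennreal measure)"]] by simp
  qed
  have sub: "S \<subseteq> A" if A: "kernel_invariant_subalgebra Q D T A" for A
  proof -
    have Aalg: "sigma_algebra (space Q) A" and AQ: "A \<subseteq> sets Q"
      and Am: "\<And>C. C \<in> sets (sigma (space Q) A \<Otimes>\<^sub>M D) \<Longrightarrow>
                 (\<lambda>x. emeasure (T x) C) \<in> borel_measurable (sigma (space Q) A)"
      using A unfolding kernel_invariant_subalgebra_def by auto
    have AP: "A \<subseteq> Pow (space Q)" using Aalg unfolding sigma_algebra_iff2 by blast
    have sA: "sets (sigma (space Q) A) = A" using Aalg AP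
      by (simp add: sigma_algebra.sigma_sets_eq)
    have spA: "space (sigma (space Q) A) = space Q" using AP by simp
    have key: "{x \<in> space Q. f x \<in> E \<and> g (f x) \<in> B} \<in> A"
      if E: "E \<in> A" and B: "B \<in> sets D" for E B
    proof -
      have EB: "E \<times> B \<in> sets (sigma (space Q) A \<Otimes>\<^sub>M D)" using E B sA by auto
      have EBQ: "E \<times> B \<in> sets (Q \<Otimes>\<^sub>M D)" using E B AQ by auto
      have m: "(\<lambda>x. emeasure (T x) (E \<times> B)) \<in> borel_measurable (sigma (space Q) A)"
        by (rule Am[OF EB])
      have "(\<lambda>x. emeasure (T x) (E \<times> B)) -` {1} \<inter> space (sigma (space Q) A) \<in> sets (sigma (space Q) A)"
        using m by (rule measurable_sets) simp
      moreover have "(\<lambda>x. emeasure (T x) (E \<times> B)) -` {1} \<inter> space (sigma (space Q) A)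
          = {x \<in> space Q. f x \<in> E \<and> g (f x) \<in> B}"
        using EBQ spA unfolding T_def by (auto simp: emeasure_return indicator_def)
      ultimately show ?thesis using sA by simp
    qed
    have stepA: "f -` E \<inter> space Q \<in> A" if "E \<in> A" for E
    proof -
      have "{x \<in> space Q. f x \<in> E \<and> g (f x) \<in> space D} = f -` E \<inter> space Q"
        using fs gs by auto
      then show ?thesis using key[OF that sets.top] by simp
    qed
    have topA: "space Q \<in> A" using Aalg unfolding sigma_algebra_iff2 by (metis Diff_empty)
    have baseA: "(g \<circ> f) -` B \<inter> space Q \<in> A" if "B \<in> sets D" for B
    proof -
      have "{x \<in> space Q. f x \<in> space Q \<and> g (f x) \<in> B} = (g \<circ> f) -` B \<inter> space Q"
        using fs by auto
      then show ?thesis using key[OF topA that] by simp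
    qed
    have gen: "(g \<circ> (f ^^ Suc k)) -` B \<inter> space Q \<in> A" if "B \<in> sets D" for k B
    proof (induction k)
      case 0 then show ?case using baseA[OF that] by (simp add: o_def)
    next
      case (Suc k)
      have e: "f -` ((g \<circ> (f ^^ Suc k)) -` B \<inter> space Q) \<inter> space Q = (g \<circ> (f ^^ Suc (Suc k))) -` B \<inter> space Q"
        using fs by (auto simp: funpow_Suc_right simp del: funpow.simps)
      show ?case using stepA[OF Suc] unfolding e .
    qed
    have "G \<subseteq> A"
    proof
      fix X assume "X \<in> G"
      then obtain k B where kB: "k \<ge> 1" "B \<in> sets D" "X = (g \<circ> (f ^^ k)) -` B \<inter> space Q"
        unfolding G_def by auto
      then obtain j where "k = Suc j" by (cases k) auto
      then show "X \<in> A" using gen[OF kB(2)] kB(3) by simp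
    qed
    then show ?thesis unfolding S_def
      by (rule sigma_algebra.sigma_sets_subset[OF Aalg])
  qed
  have "sigmaQ Q D T = S"
    unfolding sigmaQ_def using inv sub by blast
  then show ?thesis unfolding T_def S_def G_def .
qed

end
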